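(* Let $V$ be a real inner product space with induced norm $\lVert\cdot\rVert$. Let $a,b,a',b'\in V$ and $\gamma\ge0$ satisfy \[ \max\{\lVert x-y\rVert : x,y\in\{a,b,a',b'\}\}\le\gamma\le 2\lVert a-b\rVert+2\lVert a'-b'\rVert . \] Then, with $m=(a+b)/2$ and $m'=(a'+b')/2$, we have $\lVert m-m'\rVert\le\sqrt{\tfrac{31}{32}}\,\gamma$. *)

theory Defs
  imports "HOL-Analysis.Analysis"
begin

end

theory Submission
  imports Defs
begin

lemma par_law: "norm (p + q)^2 + norm (p - q)^2 = 2 * norm p ^2 + 2 * norm (q::'a::real_inner)^2"
  by (simp add: power2_norm_eq_inner inner_add inner_diff inner_commute algebra_simps)

lemma arith_aux:
  fixes N g X Y Z W U V A B C D :: real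
  assumes "X + Z = 2*A + 2*B" "Y + W = 2*C + 2*D" "W + Z = 2*U + 2*V"
    "A \<le> g" "B \<le> g" "C \<le> g" "D \<le> g" "g \<le> 8 * (U + V)"
    "4 * N = X" "4 * N = Y"
  shows "8 * N \<le> (31/4) * g"
proof -
  have "g \<le> 8 * U + 8 * V" using assms(8) by (simp add: algebra_simps)
  then show ?thesis using assms(1-7,9,10) by linarith
qed

theorem lemma3:
  fixes a b a' b' :: "'a :: real_inner" and \<gamma> :: real
  assumes "\<gamma> \<ge> 0"
    and "\<forall>x\<in>{a, b, a', b'}. \<forall>y\<in>{a, b, a', b'}. norm (x - y) \<le> \<gamma>"
    and "\<gamma> \<le> 2 * norm (a - b) + 2 * norm (a' - b')"
  shows "norm ((a + b) /\<^sub>R 2 - (a' + b') /\<^sub>R 2) \<le> sqrt (31 / 32) * \<gamma>"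
proof -
  define N where "N = norm ((a + b) /\<^sub>R 2 - (a' + b') /\<^sub>R 2)"
  have e: "(a + b) /\<^sub>R 2 - (a' + b') /\<^sub>R 2 = (1/2) *\<^sub>R ((a - a') + (b - b'))"
    by (simp add: algebra_simps)
  have e2: "(a - a') + (b - b') = (a - b') + (b - a')" by (simp add: algebra_simps)
  have hN: "2 * N = norm ((a - a') + (b - b'))" unfolding N_def e by simp
  have hN2: "2 * N = norm ((a - b') + (b - a'))" using hN e2 by simp
  have P1: "norm ((a - a') + (b - b'))^2 + norm ((a - b) - (a' - b'))^2 = 2 * norm (a - a')^2 + 2 * norm (b - b')^2"
    using par_law[of "a - a'" "b - b'"] by (simp add: algebra_simps)
  have P2: "norm ((a - b') + (b - a'))^2 + norm ((a - b) + (a' - b'))^2 = 2 * norm (a - b')^2 + 2 * norm (b - a')^2"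
    using par_law[of "a - b'" "b - a'"] by (simp add: algebra_simps)
  have P3: "norm ((a - b) + (a' - b'))^2 + norm ((a - b) - (a' - b'))^2 = 2 * norm (a - b)^2 + 2 * norm (a' - b')^2"
    using par_law by blast
  have d1: "norm (a - a') \<le> \<gamma>" "norm (b - b') \<le> \<gamma>" "norm (a - b') \<le> \<gamma>" "norm (b - a') \<le> \<gamma>"
    using assms(2) by auto
  have s1: "norm (a - a')^2 \<le> \<gamma>^2" "norm (b - b')^2 \<le> \<gamma>^2" "norm (a - b')^2 \<le> \<gamma>^2" "norm (b - a')^2 \<le> \<gamma>^2"
    using d1 by (auto intro!: power_mono)
  have g: "\<gamma>^2 \<le> 8 * (norm (a - b)^2 + norm (a' - b')^2)"
  proof -
    have "\<gamma>^2 \<le> (2 * norm (a - b) + 2 * norm (a' - b'))^2"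
      using assms(1,3) by (auto intro!: power_mono)
    also have "\<dots> \<le> 8 * (norm (a - b)^2 + norm (a' - b')^2)"
      using sum_squares_ge_zero[of "norm (a-b) - norm (a'-b')" 0] 
      by (simp add: power2_eq_square algebra_simps)
    finally show ?thesis .
  qed
  have q1: "4 * N^2 = norm ((a - a') + (b - b'))^2" using hN[symmetric] by (simp add: power_mult_distrib)
  have q2: "4 * N^2 = norm ((a - b') + (b - a'))^2" using hN2[symmetric] by (simp add: power_mult_distrib)
  have "8 * N^2 \<le> (31/4) * \<gamma>^2"
    using arith_aux[OF P1 P2 P3 s1 g q1 q2] .
  hence "N^2 \<le> (sqrt (31/32) * \<gamma>)^2"
    by (simp add: power_mult_distrib)
  hence "N \<le> sqrt (31/32) * \<gamma>"
    using assms(1) by (meson power2_le_imp_le real_sqrt_ge_zero mult_nonneg_nonneg zero_le_divide_iff zero_le_numeral)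
  thus ?thesis unfolding N_def .
qed

end
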